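(* Let $P$ be a (possibly infinite) positive causal logic program with $n$ rules ($n\le\omega$, with $n=\omega$ if $P$ is infinite). Then (i) the least fixpoint $\mathrm{lfp}(T_P)$ of the direct consequences operator exists and is the $\le$-least causal model of $P$, and (ii) $\mathrm{lfp}(T_P)=T_P\!\uparrow\!\omega=T_P\!\uparrow\! n$.
   Context: Causal graphs over a label set $Lb$: graphs $\langle V,E\rangle$, $V\subseteq Lb$, $E\subseteq V\times V$, reflexively and transitively closed; $G\le G'$ iff $G\supseteq G'$ (as vertex and edge sets). $G*G'=(G\cup G')^*$, $G\cdot G'=(G\odot G')^*$ where $G\odot G'$ has vertex set $V\cup V'$ and edge set $E\cup E'\cup\{(x,y)\mid x\in V,y\in V'\}$, and $^*$ is reflexive–transitive closure. Causal values are down-sets (ideals) of $\langle$causal graphs$,\le\rangle$, ordered by $\subseteq$; $U*U'=U\cap U'$, $U+U'=U\cup U'$, $U\cdot U'={\downarrow}\{G\cdot G'\mid G\in U,G'\in U'\}$; arbitrary sums are unions and arbitrary products intersections; $0=\emptyset$, $1$ = the set of all causal graphs; a label $l$ stands for the value ${\downarrow}G_l$ where $G_l$ has the single vertex $l$ and single edge $(l,l)$. A causal logic program over signature $\langle At,Lb\rangle$ is a set of rules $t: H\leftarrow B_1,\dots,B_n$ with $t\in Lb\cup\{1\}$, $H\in At$, $B_i$ literals ($p$ or $\mathit{not}\ p$); it is positive if no default negation occurs. A causal interpretation is a map $I:At\to$ causal values; $I\le J$ iff $I(p)\le J(p)$ for all $p$. $I$ is a causal model of positive $P$ iff for every rule,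 $(I(B_1)*\dots*I(B_n))\cdot t\le I(H)$ (empty product $=1$). $T_P(I)(p)=\sum\{(I(B_1)*\dots*I(B_n))\cdot t\mid (t:p\leftarrow B_1,\dots,B_n)\in P\}$. $T_P\!\uparrow\!0$ maps every atom to $0$, $T_P\!\uparrow\!(k+1)=T_P(T_P\!\uparrow\!k)$, and $T_P\!\uparrow\!\omega(p)=\sum_{k<\omega}T_P\!\uparrow\!k(p)$. *)

theory Defs
  imports Main
begin

text \<open>A graph over labels of type 'l: a pair (V, E). Lb = UNIV :: 'l set.\<close>
type_synonym 'l graph = "'l set \<times> ('l \<times> 'l) set"

definition is_cgraph :: "'l graph \<Rightarrow> bool" where
  "is_cgraph G \<longleftrightarrow> snd G \<subseteq> fst G \<times> fst G \<and> Id_on (fst G) \<subseteq> snd G \<and> trans (snd G)"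

definition cg_le :: "'l graph \<Rightarrow> 'l graph \<Rightarrow> bool" where
  "cg_le G G' \<longleftrightarrow> fst G' \<subseteq> fst G \<and> snd G' \<subseteq> snd G"

definition gclose :: "'l graph \<Rightarrow> 'l graph" where
  "gclose G = (fst G, Id_on (fst G) \<union> trancl (snd G))"

definition cg_prod :: "'l graph \<Rightarrow> 'l graph \<Rightarrow> 'l graph" where
  "cg_prod G G' = gclose (fst G \<union> fst G', snd G \<union> snd G')"

definition cg_app :: "'l graph \<Rightarrow> 'l graph \<Rightarrow> 'l graph" where
  "cg_app G G' = gclose (fst G \<union> fst G', snd G \<union> snd G' \<union> fst G \<times> fst G')"

type_synonym 'l cvalue = "'l graph set"

definition is_cvalue :: "'l cvalue \<Rightarrow> bool" where
  "is_cvalue U \<longleftrightarrow> (\<forall>G\<in>U. is_cgraph G) \<and>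
     (\<forall>G G'. G \<in> U \<longrightarrow> is_cgraph G' \<longrightarrow> cg_le G' G \<longrightarrow> G' \<in> U)"

definition down :: "'l graph set \<Rightarrow> 'l cvalue" where
  "down S = {G. is_cgraph G \<and> (\<exists>H\<in>S. cg_le G H)}"

definition cv_one :: "'l cvalue" where
  "cv_one = {G. is_cgraph G}"

definition cv_prod :: "'l cvalue \<Rightarrow> 'l cvalue \<Rightarrow> 'l cvalue" where
  "cv_prod U U' = U \<inter> U'"

definition cv_app :: "'l cvalue \<Rightarrow> 'l cvalue \<Rightarrow> 'l cvalue" where
  "cv_app U U' = down {cg_app G G' | G G'. G \<in> U \<and> G' \<in> U'}"

definition label_val :: "'l \<Rightarrow> 'l cvalue" where
  "label_val l = down {({l}, {(l, l)})}"

text \<open>Rule labels t \<in> Lb \<union> {1}: None stands for 1, Some l for label l.\<close>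
definition tval :: "'l option \<Rightarrow> 'l cvalue" where
  "tval t = (case t of None \<Rightarrow> cv_one | Some l \<Rightarrow> label_val l)"

datatype 'a literal = Pos 'a | Neg 'a

datatype ('a, 'l) crule = Rule (rlabel: "'l option") (rhead: 'a) (rbody: "'a literal list")

type_synonym ('a, 'l) cprogram = "('a, 'l) crule set"

definition positive :: "('a, 'l) cprogram \<Rightarrow> bool" where
  "positive P \<longleftrightarrow> (\<forall>r\<in>P. \<forall>b\<in>set (rbody r). \<exists>p. b = Pos p)"

type_synonym ('a, 'l) cinterp = "'a \<Rightarrow> 'l cvalue"

definition is_cinterp :: "('a, 'l) cinterp \<Rightarrow> bool" where
  "is_cinterp I \<longleftrightarrow> (\<forall>p. is_cvalue (I p))"

definition ci_le :: "('a, 'l) cinterp \<Rightarrow> ('a, 'l) cinterp \<Rightarrow> bool" where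
  "ci_le I J \<longleftrightarrow> (\<forall>p. I p \<subseteq> J p)"

text \<open>Value of a literal (negative literals do not occur in positive programs;
  for them we use the usual 1/0 reading).\<close>
fun lit_val :: "('a, 'l) cinterp \<Rightarrow> 'a literal \<Rightarrow> 'l cvalue" where
  "lit_val I (Pos p) = I p"
| "lit_val I (Neg p) = (if I p = {} then cv_one else {})"

definition body_val :: "('a, 'l) cinterp \<Rightarrow> 'a literal list \<Rightarrow> 'l cvalue" where
  "body_val I bs = foldr (\<lambda>b acc. cv_prod (lit_val I b) acc) bs cv_one"

definition causal_model :: "('a, 'l) cprogram \<Rightarrow> ('a, 'l) cinterp \<Rightarrow> bool" where
  "causal_model P I \<longleftrightarrow> is_cinterp I \<and>
     (\<forall>r\<in>P. cv_app (body_val I (rbody r)) (tval (rlabel r)) \<subseteq> I (rhead r))"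

definition TP :: "('a, 'l) cprogram \<Rightarrow> ('a, 'l) cinterp \<Rightarrow> ('a, 'l) cinterp" where
  "TP P I = (\<lambda>p. \<Union> {cv_app (body_val I (rbody r)) (tval (rlabel r)) | r. r \<in> P \<and> rhead r = p})"

definition TP_up :: "('a, 'l) cprogram \<Rightarrow> nat \<Rightarrow> ('a, 'l) cinterp" where
  "TP_up P k = (TP P ^^ k) (\<lambda>_. {})"

definition TP_omega :: "('a, 'l) cprogram \<Rightarrow> ('a, 'l) cinterp" where
  "TP_omega P = (\<lambda>p. \<Union>k. TP_up P k p)"

end

theory Submission
  imports Defs
begin

lemma body_val_mem: "B \<in> body_val I bs \<longleftrightarrow> is_cgraph B \<and> (\<forall>b\<in>set bs. B \<in> lit_val I b)"
  by (induction bs) (auto simp: body_val_def cv_prod_def cv_one_def)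

lemma body_val_pos:
  assumes "\<forall>b\<in>set bs. \<exists>p. b = Pos p"
  shows "B \<in> body_val I bs \<longleftrightarrow> is_cgraph B \<and> (\<forall>c. Pos c \<in> set bs \<longrightarrow> B \<in> I c)"
  using assms unfolding body_val_mem by (metis lit_val.simps(1))

lemma positive_subset: "positive S \<Longrightarrow> S' \<subseteq> S \<Longrightarrow> positive S'"
  unfolding positive_def by blast

lemma positive_rule: "positive S \<Longrightarrow> r \<in> S \<Longrightarrow> \<forall>b\<in>set (rbody r). \<exists>p. b = Pos p"
  unfolding positive_def by blast

lemma body_val_mono:
  assumes "\<forall>b\<in>set bs. \<exists>p. b = Pos p" "\<And>c. I c \<subseteq> J c"
  shows "body_val I bs \<subseteq> body_val J bs"
  using assms body_val_pos[OF assms(1)] by blast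

lemma mem_cv_app: "G \<in> cv_app U V \<longleftrightarrow> is_cgraph G \<and> (\<exists>B\<in>U. \<exists>B'\<in>V. cg_le G (cg_app B B'))"
  unfolding cv_app_def down_def by blast

lemma cv_app_mono: "U \<subseteq> U' \<Longrightarrow> cv_app U V \<subseteq> cv_app U' V"
  unfolding subset_iff mem_cv_app by blast

lemma cg_le_app: "cg_le (cg_app B B') B"
  unfolding cg_le_def cg_app_def gclose_def by auto

lemma cg_le_trans: "cg_le a b \<Longrightarrow> cg_le b c \<Longrightarrow> cg_le a c"
  unfolding cg_le_def by blast

lemma TP_mem: "G \<in> TP P I p \<longleftrightarrow> (\<exists>r\<in>P. rhead r = p \<and> G \<in> cv_app (body_val I (rbody r)) (tval (rlabel r)))"
  unfolding TP_def by blast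

lemma TP_up_Suc: "TP_up P (Suc n) = TP P (TP_up P n)"
  by (simp add: TP_up_def)

lemma TP_up_0: "TP_up P 0 p = {}"
  by (simp add: TP_up_def)

fun W :: "nat \<Rightarrow> ('a,'l) cprogram \<Rightarrow> ('a,'l) cinterp" where
  "W 0 S = (\<lambda>_. {})"
| "W (Suc n) S = (\<lambda>q. \<Union>{cv_app (body_val (W n (S - {r})) (rbody r)) (tval (rlabel r)) | r. r \<in> S \<and> rhead r = q})"

definition Vr :: "('a,'l) cprogram \<Rightarrow> ('a,'l) cinterp" where
  "Vr S = W (card S) S"

lemma V_eq:
  assumes "finite S"
  shows "G \<in> Vr S q \<longleftrightarrow> (\<exists>r\<in>S. rhead r = q \<and> G \<in> cv_app (body_val (Vr (S-{r})) (rbody r)) (tval (rlabel r)))"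
proof (cases "S = {}")
  case True
  then show ?thesis by (simp add: Vr_def)
next
  case False
  then obtain m where m: "card S = Suc m" using assms card_gt_0_iff
    by (metis gr0_implies_Suc)
  have e: "r \<in> S \<Longrightarrow> Vr (S - {r}) = W m (S - {r})" for r
    unfolding Vr_def using m assms by simp
  have "G \<in> Vr S q \<longleftrightarrow> (\<exists>r\<in>S. rhead r = q \<and> G \<in> cv_app (body_val (W m (S-{r})) (rbody r)) (tval (rlabel r)))"
    unfolding Vr_def m by auto
  then show ?thesis using e by auto
qed

lemma W_sub_TP:
  assumes "positive P" "S \<subseteq> P"
  shows "W n S q \<subseteq> TP_up P n q"
  using assms(2)
proof (induction n arbitrary: S q)
  case 0
  then show ?case by simp
next
  case (Suc n)
  show ?case
  proof
    fix G assume "G \<in> W (Suc n) S q"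
    then obtain r where r: "r \<in> S" "rhead r = q"
      "G \<in> cv_app (body_val (W n (S - {r})) (rbody r)) (tval (rlabel r))" by auto
    have "r \<in> P" using r Suc by blast
    have "body_val (W n (S - {r})) (rbody r) \<subseteq> body_val (TP_up P n) (rbody r)"
      apply (rule body_val_mono[OF positive_rule[OF assms(1) \<open>r \<in> P\<close>]])
      using Suc by blast
    then have "G \<in> cv_app (body_val (TP_up P n) (rbody r)) (tval (rlabel r))"
      using r(3) cv_app_mono by blast
    then show "G \<in> TP_up P (Suc n) q" unfolding TP_up_Suc TP_mem using r \<open>r \<in> P\<close> by blast
  qed
qed

lemma V_mono:
  assumes "finite S" "positive S" "S' \<subseteq> S"
  shows "Vr S' q \<subseteq> Vr S q"
  using assms
proof (induction S arbitrary: S' q rule: finite_psubset_induct)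
  case (psubset S)
  show ?case
  proof
    fix G assume "G \<in> Vr S' q"
    have fS': "finite S'" using psubset(1) psubset(4) by (rule rev_finite_subset)
    obtain r where r: "r \<in> S'" "rhead r = q"
      "G \<in> cv_app (body_val (Vr (S' - {r})) (rbody r)) (tval (rlabel r))"
      using \<open>G \<in> Vr S' q\<close> V_eq[OF fS'] by blast
    have rS: "r \<in> S" using r(1) psubset(4) by blast
    have sub: "S - {r} \<subset> S" using rS by blast
    have ps: "positive (S - {r})" using psubset(3) by (rule positive_subset) blast
    have ss: "S' - {r} \<subseteq> S - {r}" using psubset(4) by blast
    have IH: "Vr (S' - {r}) c \<subseteq> Vr (S - {r}) c" for c
      by (rule psubset(2)[OF sub ps ss])
    have "body_val (Vr (S' - {r})) (rbody r) \<subseteq> body_val (Vr (S - {r})) (rbody r)"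
      by (rule body_val_mono[OF positive_rule[OF psubset(3) rS] IH])
    then have "G \<in> cv_app (body_val (Vr (S - {r})) (rbody r)) (tval (rlabel r))"
      using r(3) cv_app_mono by blast
    then show "G \<in> Vr S q" using V_eq[OF psubset(1)] rS r(2) by blast
  qed
qed

lemma V_down:
  assumes "finite S" "H \<in> Vr S q" "is_cgraph G" "cg_le G H"
  shows "G \<in> Vr S q"
proof -
  obtain r where r: "r \<in> S" "rhead r = q"
    "H \<in> cv_app (body_val (Vr (S - {r})) (rbody r)) (tval (rlabel r))"
    using assms(2) V_eq[OF assms(1)] by blast
  obtain B B' where "B \<in> body_val (Vr (S - {r})) (rbody r)" "B' \<in> tval (rlabel r)"
    "cg_le H (cg_app B B')" using r(3) unfolding mem_cv_app by blast
  moreover have "cg_le G (cg_app B B')" using cg_le_trans[OF assms(4) calculation(3)] .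
  ultimately have "G \<in> cv_app (body_val (Vr (S - {r})) (rbody r)) (tval (rlabel r))"
    using assms(3) unfolding mem_cv_app by blast
  then show ?thesis using V_eq[OF assms(1)] r by blast
qed

lemma V_star:
  assumes "finite S" "positive S" "r \<in> S" "G \<in> Vr S b"
  shows "G \<in> Vr (S - {r}) b \<or> G \<in> Vr S (rhead r)"
  using assms
proof (induction S arbitrary: r b G rule: finite_psubset_induct)
  case (psubset S)
  obtain r' where r': "r' \<in> S" "rhead r' = b"
    "G \<in> cv_app (body_val (Vr (S - {r'})) (rbody r')) (tval (rlabel r'))"
    using psubset(5) V_eq[OF psubset(1)] by blast
  then obtain B B' where BB: "is_cgraph G" "B \<in> body_val (Vr (S - {r'})) (rbody r')"
    "B' \<in> tval (rlabel r')" "cg_le G (cg_app B B')"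
    unfolding mem_cv_app by blast
  have pr': "\<forall>b\<in>set (rbody r'). \<exists>p. b = Pos p" using positive_rule[OF psubset(3) r'(1)] .
  show ?case
  proof (cases "r' = r")
    case True
    then show ?thesis using psubset(5) r'(2) by blast
  next
    case False
    have sub: "S - {r'} \<subset> S" using r'(1) by blast
    have pos': "positive (S - {r'})" using psubset(3) by (rule positive_subset) blast
    have fin': "finite (S - {r'})" using psubset(1) by blast
    have rin: "r \<in> S - {r'}" using False psubset(4) by blast
    have Bc: "is_cgraph B" "\<And>c. Pos c \<in> set (rbody r') \<Longrightarrow> B \<in> Vr (S - {r'}) c"
      using BB(2) body_val_pos[OF pr', of B] by auto
    show ?thesis
    proof (cases "\<exists>c. Pos c \<in> set (rbody r') \<and> B \<in> Vr (S - {r'}) (rhead r)")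
      case True
      then have "B \<in> Vr (S - {r'}) (rhead r)" by blast
      moreover have "Vr (S - {r'}) (rhead r) \<subseteq> Vr S (rhead r)"
        using V_mono[OF psubset(1) psubset(3)] sub by blast
      ultimately have "B \<in> Vr S (rhead r)" by blast
      moreover have "cg_le G B" using cg_le_trans[OF BB(4) cg_le_app] .
      ultimately show ?thesis using V_down[OF psubset(1) _ BB(1)] by blast
    next
      case False
      have "B \<in> Vr (S - {r'} - {r}) c" if "Pos c \<in> set (rbody r')" for c
      proof -
        have "B \<in> Vr (S - {r'} - {r}) c \<or> B \<in> Vr (S - {r'}) (rhead r)"
          by (rule psubset(2)[OF sub pos' rin Bc(2)[OF that]])
        then show ?thesis using False that by blast
      qed
      moreover have "S - {r'} - {r} = S - {r} - {r'}" by blast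
      ultimately have "B \<in> body_val (Vr (S - {r} - {r'})) (rbody r')"
        using body_val_pos[OF pr', of B] Bc(1) by auto
      then have "G \<in> cv_app (body_val (Vr (S - {r} - {r'})) (rbody r')) (tval (rlabel r'))"
        using BB unfolding mem_cv_app by blast
      moreover have "r' \<in> S - {r}" using \<open>r' \<noteq> r\<close> r'(1) by blast
      moreover have "finite (S - {r})" using psubset(1) by blast
      ultimately have "G \<in> Vr (S - {r}) b" using V_eq[of "S - {r}"] r'(2) by blast
      then show ?thesis by blast
    qed
  qed
qed

lemma TP_up_sub_V:
  assumes "finite P" "positive P"
  shows "TP_up P k q \<subseteq> Vr P q"
proof (induction k arbitrary: q)
  case 0
  then show ?case by (simp add: TP_up_0)
next
  case (Suc k)
  show ?case
  proof
    fix G assume "G \<in> TP_up P (Suc k) q"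
    then obtain r where r: "r \<in> P" "rhead r = q"
      "G \<in> cv_app (body_val (TP_up P k) (rbody r)) (tval (rlabel r))"
      unfolding TP_up_Suc TP_mem by blast
    then obtain B B' where BB: "is_cgraph G" "B \<in> body_val (TP_up P k) (rbody r)"
      "B' \<in> tval (rlabel r)" "cg_le G (cg_app B B')"
      unfolding mem_cv_app by blast
    have pr: "\<forall>b\<in>set (rbody r). \<exists>p. b = Pos p" using positive_rule[OF assms(2) r(1)] .
    have Bc0: "is_cgraph B" "\<And>c. Pos c \<in> set (rbody r) \<Longrightarrow> B \<in> TP_up P k c"
      using BB(2) body_val_pos[OF pr, of B] by blast+
    have Bc: "\<And>c. Pos c \<in> set (rbody r) \<Longrightarrow> B \<in> Vr P c"
      using Bc0(2) Suc.IH by blast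
    show "G \<in> Vr P q"
    proof (cases "\<exists>c. Pos c \<in> set (rbody r) \<and> B \<in> Vr P (rhead r)")
      case True
      then have "B \<in> Vr P q" using r(2) by blast
      moreover have "cg_le G B" using cg_le_trans[OF BB(4) cg_le_app] .
      ultimately show ?thesis using V_down[OF assms(1) _ BB(1)] by blast
    next
      case False
      have "B \<in> Vr (P - {r}) c" if "Pos c \<in> set (rbody r)" for c
      proof -
        have "B \<in> Vr (P - {r}) c \<or> B \<in> Vr P (rhead r)"
          by (rule V_star[OF assms r(1) Bc[OF that]])
        then show ?thesis using False that by blast
      qed
      then have "B \<in> body_val (Vr (P - {r})) (rbody r)"
        using body_val_pos[OF pr, of B] Bc0(1) by blast
      then have "G \<in> cv_app (body_val (Vr (P - {r})) (rbody r)) (tval (rlabel r))"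
        using BB unfolding mem_cv_app by blast
      then show ?thesis using V_eq[OF assms(1)] r(1,2) by blast
    qed
  qed
qed

lemma TP_mono:
  assumes "positive P" "\<And>p. I p \<subseteq> J p"
  shows "TP P I p \<subseteq> TP P J p"
proof
  fix G assume "G \<in> TP P I p"
  then obtain r where r: "r \<in> P" "rhead r = p"
      "G \<in> cv_app (body_val I (rbody r)) (tval (rlabel r))" unfolding TP_mem by blast
  have "body_val I (rbody r) \<subseteq> body_val J (rbody r)"
    by (rule body_val_mono[OF positive_rule[OF assms(1) r(1)] assms(2)])
  then show "G \<in> TP P J p" unfolding TP_mem using r cv_app_mono by blast
qed

lemma TP_up_step:
  assumes "positive P"
  shows "TP_up P k p \<subseteq> TP_up P (Suc k) p"
proof (induction k arbitrary: p)
  case 0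
  then show ?case by (simp add: TP_up_0)
next
  case (Suc k)
  have "TP P (TP_up P k) p \<subseteq> TP P (TP_up P (Suc k)) p"
    by (rule TP_mono[OF assms Suc.IH])
  then show ?case by (simp only: TP_up_Suc)
qed

lemma TP_up_mono: "positive P \<Longrightarrow> k \<le> k' \<Longrightarrow> TP_up P k p \<subseteq> TP_up P k' p"
  by (rule lift_Suc_mono_le[of "\<lambda>k. TP_up P k p"]) (rule TP_up_step)

lemma chain_list:
  assumes "positive P"
  shows "\<forall>b\<in>set bs. \<forall>c. b = Pos c \<longrightarrow> (\<exists>k. B \<in> TP_up P k c) \<Longrightarrow>
    \<exists>k. \<forall>b\<in>set bs. \<forall>c. b = Pos c \<longrightarrow> B \<in> TP_up P k c"
proof (induction bs)
  case Nil
  then show ?case by simp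
next
  case (Cons a bs)
  then obtain k1 where k1: "\<forall>b\<in>set bs. \<forall>c. b = Pos c \<longrightarrow> B \<in> TP_up P k1 c" by auto
  obtain k2 where k2: "\<forall>c. a = Pos c \<longrightarrow> B \<in> TP_up P k2 c"
  proof (cases a)
    case (Pos x1)
    then show ?thesis using Cons.prems that by auto
  next
    case (Neg x2)
    then show ?thesis using that by auto
  qed
  have m1: "TP_up P k1 c \<subseteq> TP_up P (max k1 k2) c" for c
    by (rule TP_up_mono[OF assms]) simp
  have m2: "TP_up P k2 c \<subseteq> TP_up P (max k1 k2) c" for c
    by (rule TP_up_mono[OF assms]) simp
  have "\<forall>b\<in>set (a # bs). \<forall>c. b = Pos c \<longrightarrow> B \<in> TP_up P (max k1 k2) c"
  proof (intro ballI allI impI)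
    fix b c assume b: "b \<in> set (a # bs)" "b = Pos c"
    show "B \<in> TP_up P (max k1 k2) c"
    proof (cases "b = a")
      case True
      then have "B \<in> TP_up P k2 c" using k2 b(2) by simp
      then show ?thesis using m2 by blast
    next
      case False
      then have "b \<in> set bs" using b(1) by simp
      then have "B \<in> TP_up P k1 c" using k1 b(2) by simp
      then show ?thesis using m1 by blast
    qed
  qed
  then show ?case by blast
qed

lemma omega_fix:
  assumes "positive P"
  shows "TP P (TP_omega P) = TP_omega P"
proof (rule ext, rule equalityI)
  fix p
  show "TP P (TP_omega P) p \<subseteq> TP_omega P p"
  proof
    fix G assume "G \<in> TP P (TP_omega P) p"
    then obtain r where r: "r \<in> P" "rhead r = p"
      "G \<in> cv_app (body_val (TP_omega P) (rbody r)) (tval (rlabel r))" unfolding TP_mem by blast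
    then obtain B B' where BB: "is_cgraph G" "B \<in> body_val (TP_omega P) (rbody r)"
      "B' \<in> tval (rlabel r)" "cg_le G (cg_app B B')"
      unfolding mem_cv_app by blast
    have pr: "\<forall>b\<in>set (rbody r). \<exists>p. b = Pos p" using positive_rule assms r by blast
    have "\<forall>b\<in>set (rbody r). \<forall>c. b = Pos c \<longrightarrow> (\<exists>k. B \<in> TP_up P k c)"
      using BB(2) body_val_pos[OF pr, of B] unfolding TP_omega_def by auto
    then obtain k where k: "\<forall>b\<in>set (rbody r). \<forall>c. b = Pos c \<longrightarrow> B \<in> TP_up P k c"
      using chain_list[OF assms] by blast
    have "B \<in> body_val (TP_up P k) (rbody r)" using k body_val_pos[OF pr, of B] BB(2) by auto
    then have "G \<in> TP_up P (Suc k) p" unfolding TP_up_Suc TP_mem mem_cv_app using r BB by blast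
    then show "G \<in> TP_omega P p" unfolding TP_omega_def by blast
  qed
next
  fix p
  show "TP_omega P p \<subseteq> TP P (TP_omega P) p"
  proof
    fix G assume "G \<in> TP_omega P p"
    then obtain k where k: "G \<in> TP_up P k p" unfolding TP_omega_def by blast
    then obtain j where j: "k = Suc j" by (cases k) (auto simp: TP_up_0)
    have "TP P (TP_up P j) p \<subseteq> TP P (TP_omega P) p"
      by (rule TP_mono[OF assms]) (auto simp: TP_omega_def)
    moreover have "G \<in> TP P (TP_up P j) p" using k unfolding j TP_up_Suc .
    ultimately show "G \<in> TP P (TP_omega P) p" by blast
  qed
qed

lemma omega_least:
  assumes "positive P" "\<And>p. TP P J p \<subseteq> J p"
  shows "ci_le (TP_omega P) J"
proof -
  have "TP_up P k p \<subseteq> J p" for k p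
  proof (induction k arbitrary: p)
    case 0 then show ?case by (simp add: TP_up_0)
  next
    case (Suc k)
    then show ?case unfolding TP_up_Suc using TP_mono[OF assms(1)] assms(2) by blast
  qed
  then show ?thesis unfolding ci_le_def TP_omega_def by blast
qed

lemma is_cvalue_Union: "(\<forall>U\<in>F. is_cvalue U) \<Longrightarrow> is_cvalue (\<Union>F)"
  unfolding is_cvalue_def by blast

lemma is_cvalue_cv_app: "is_cvalue (cv_app U V)"
  unfolding is_cvalue_def
proof (intro conjI ballI allI impI)
  show "is_cgraph G" if "G \<in> cv_app U V" for G using that unfolding mem_cv_app by blast
  show "G' \<in> cv_app U V" if h: "G \<in> cv_app U V" "is_cgraph G'" "cg_le G' G" for G G'
  proof -
    obtain B B' where "B \<in> U" "B' \<in> V" "cg_le G (cg_app B B')" using h(1) unfolding mem_cv_app by blast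
    then show ?thesis using h(2) cg_le_trans[OF h(3)] unfolding mem_cv_app by blast
  qed
qed

lemma is_cvalue_TP: "is_cvalue (TP P I p)"
  unfolding TP_def by (rule is_cvalue_Union) (auto intro: is_cvalue_cv_app)

lemma is_cvalue_TP_up: "is_cvalue (TP_up P k p)"
proof (cases k)
  case 0 then show ?thesis by (simp add: TP_up_0 is_cvalue_def)
next
  case (Suc j) then show ?thesis by (simp only: TP_up_Suc is_cvalue_TP)
qed

lemma is_cinterp_omega: "is_cinterp (TP_omega P)"
  unfolding is_cinterp_def TP_omega_def
  by (auto intro!: is_cvalue_Union simp: is_cvalue_TP_up)

theorem theorem2:
  fixes P :: "('a, 'l) cprogram"
  assumes "positive P"
  shows "\<exists>L. is_cinterp L \<and> TP P L = L \<and>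
             (\<forall>J. is_cinterp J \<longrightarrow> TP P J = J \<longrightarrow> ci_le L J) \<and>
             causal_model P L \<and> (\<forall>J. causal_model P J \<longrightarrow> ci_le L J) \<and>
             L = TP_omega P \<and>
             (finite P \<longrightarrow> L = TP_up P (card P))"
proof (intro exI conjI allI impI)
  show "is_cinterp (TP_omega P)" by (rule is_cinterp_omega)
  show fx: "TP P (TP_omega P) = TP_omega P" by (rule omega_fix[OF assms])
  show "ci_le (TP_omega P) J" if "TP P J = J" for J
    by (rule omega_least[OF assms]) (simp add: that)
  have rl: "cv_app (body_val (TP_omega P) (rbody r)) (tval (rlabel r)) \<subseteq> TP_omega P (rhead r)"
    if "r \<in> P" for r
  proof
    fix G assume "G \<in> cv_app (body_val (TP_omega P) (rbody r)) (tval (rlabel r))"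
    then have "G \<in> TP P (TP_omega P) (rhead r)" unfolding TP_mem using that by blast
    then show "G \<in> TP_omega P (rhead r)" by (simp only: fx)
  qed
  show "causal_model P (TP_omega P)"
    unfolding causal_model_def using is_cinterp_omega rl by blast
  show "ci_le (TP_omega P) J" if cm: "causal_model P J" for J
  proof (rule omega_least[OF assms])
    fix p
    show "TP P J p \<subseteq> J p"
    proof
      fix G assume "G \<in> TP P J p"
      then obtain r where r: "r \<in> P" "rhead r = p"
        "G \<in> cv_app (body_val J (rbody r)) (tval (rlabel r))" unfolding TP_mem by blast
      have "cv_app (body_val J (rbody r)) (tval (rlabel r)) \<subseteq> J (rhead r)"
        using cm r(1) unfolding causal_model_def by blast
      then show "G \<in> J p" using r(2,3) by blast
    qed
  qed
  show "TP_omega P = TP_omega P" ..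
  show "TP_omega P = TP_up P (card P)" if fin: "finite P"
  proof (rule ext, rule equalityI)
    fix p
    have a: "TP_up P k p \<subseteq> TP_up P (card P) p" for k
    proof -
      have "TP_up P k p \<subseteq> Vr P p" by (rule TP_up_sub_V[OF fin assms])
      also have "Vr P p \<subseteq> TP_up P (card P) p" unfolding Vr_def by (rule W_sub_TP[OF assms]) simp
      finally show ?thesis .
    qed
    show "TP_omega P p \<subseteq> TP_up P (card P) p"
      unfolding TP_omega_def using a by blast
    show "TP_up P (card P) p \<subseteq> TP_omega P p" unfolding TP_omega_def by blast
  qed
qed

end
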